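(* Let $\mathcal{A}_1=(Q,R_1,V_1,V_1',f_1)$ and $\mathcal{A}_2=(Q,R_2,V_2,V_2',f_2)$ be two stochastic CA with the same set of states $Q$ and explicit global functions $F_1,F_2$. Then $S_{F_1}=S_{F_2}$ if and only if for every configuration $c\in Q^{\mathbb{Z}}$ there exists a measure $\gamma_c\in\mathcal{M}(R_1^{\mathbb{Z}}\times R_2^{\mathbb{Z}})$ coupling $\mathcal{A}_1$ and $\mathcal{A}_2$ on $c$, i.e. such that (1) $\gamma_c$ is a coupling of $\nu_{R_1}$ and $\nu_{R_2}$, and (2) $\gamma_c\big(\{(s_1,s_2): F_1(c,s_1)=F_2(c,s_2)\}\big)=1$.
   Context: A stochastic CA is a tuple $(Q,R,V,V',f)$ with $Q$ a finite set of states, $R$ a finite set of random symbols, $V=\{v_1,\dots,v_r\}$, $V'=\{v'_1,\dots,v'_{r'}\}$ finite subsets of $\mathbb{Z}$, and $f:Q^r\times R^{r'}\to Q$. Its explicit global function $F:Q^{\mathbb{Z}}\times R^{\mathbb{Z}}\to Q^{\mathbb{Z}}$ is $F(c,s)_z=f\big((c_{z+v_1},\dots,c_{z+v_r}),(s_{z+v'_1},\dots,s_{z+v'_{r'}})\big)$. Cylinders are $[u]_z=\{c: c_{z+x}=u_x,\ 0\le x<|u|\}$; $\nu_R$ is the uniform Bernoulli measure on $R^{\mathbb{Z}}$; $\mathcal{M}(X)$ is the set of Borel probability measures on $X$. The stochastic global function is $S_F:Q^{\mathbb{Z}}\to\mathcal{M}(Q^{\mathbb{Z}})$, $S_F(c)([u]_z)=\nu_R(\{s: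 F(c,s)\in[u]_z\})$. A coupling of $\mu_1\in\mathcal{M}(A_1^{\mathbb{Z}})$ and $\mu_2\in\mathcal{M}(A_2^{\mathbb{Z}})$ is $\gamma\in\mathcal{M}(A_1^{\mathbb{Z}}\times A_2^{\mathbb{Z}})$ with $\gamma(E_1\times A_2^{\mathbb{Z}})=\mu_1(E_1)$ and $\gamma(A_1^{\mathbb{Z}}\times E_2)=\mu_2(E_2)$ for all measurable $E_1,E_2$. *)

theory Defs
  imports "HOL-Probability.Probability"
begin

text \<open>A stochastic CA (Q,R,V,V',f): Q and R are finite types, the neighbourhoods
V = [v_1,...,v_r] and V' = [v'_1,...,v'_r'] are lists of distinct integers,
and the local rule f takes the r-tuple of neighbour states and the r'-tuple of
random symbols (as lists of those lengths).\<close>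

definition explicit_global ::
  "int list \<Rightarrow> int list \<Rightarrow> ('q list \<Rightarrow> 'r list \<Rightarrow> 'q) \<Rightarrow> (int \<Rightarrow> 'q) \<Rightarrow> (int \<Rightarrow> 'r) \<Rightarrow> (int \<Rightarrow> 'q)"
  where "explicit_global V V' f c s =
           (\<lambda>z. f (map (\<lambda>v. c (z + v)) V) (map (\<lambda>v. s (z + v)) V'))"

text \<open>The space A^Z with its product (= Borel, for finite A) sigma algebra.\<close>
definition config_space :: "(int \<Rightarrow> 'a) measure"
  where "config_space = (\<Pi>\<^sub>M z\<in>(UNIV::int set). count_space (UNIV::'a set))"

definition bernoulli_unif :: "(int \<Rightarrow> 'r::finite) measure"
  where "bernoulli_unif = (\<Pi>\<^sub>M z\<in>(UNIV::int set). measure_pmf (pmf_of_set (UNIV::'r set)))"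

definition stoch_global ::
  "((int \<Rightarrow> 'q) \<Rightarrow> (int \<Rightarrow> 'r::finite) \<Rightarrow> (int \<Rightarrow> 'q)) \<Rightarrow> (int \<Rightarrow> 'q) \<Rightarrow> (int \<Rightarrow> 'q) measure"
  where "stoch_global F c = distr bernoulli_unif config_space (F c)"

definition is_coupling :: "('a \<times> 'b) measure \<Rightarrow> 'a measure \<Rightarrow> 'b measure \<Rightarrow> bool"
  where "is_coupling \<gamma> \<mu>1 \<mu>2 \<longleftrightarrow>
           prob_space \<gamma> \<and> sets \<gamma> = sets (\<mu>1 \<Otimes>\<^sub>M \<mu>2) \<and>
           (\<forall>E1\<in>sets \<mu>1. emeasure \<gamma> (E1 \<times> space \<mu>2) = emeasure \<mu>1 E1) \<and>
           (\<forall>E2\<in>sets \<mu>2. emeasure \<gamma> (space \<mu>1 \<times> E2) = emeasure \<mu>2 E2)"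

end

theory Submission
  imports Defs "HOL-Probability.Projective_Limit"
begin


lemma space_bern[simp]: "space (bernoulli_unif :: (int \<Rightarrow> 'r::finite) measure) = UNIV"
  by (simp add: bernoulli_unif_def space_PiM)

lemma sets_bern: "sets (bernoulli_unif :: (int \<Rightarrow> 'r::finite) measure) = sets (PiM UNIV (\<lambda>_. count_space (UNIV::'r set)))"
  unfolding bernoulli_unif_def by (intro sets_PiM_cong) (simp_all add: sets_measure_pmf_count_space)

lemma prob_bern: "prob_space (bernoulli_unif :: (int \<Rightarrow> 'r::finite) measure)"
  unfolding bernoulli_unif_def by (intro prob_space_PiM) (simp add: prob_space_measure_pmf)

lemma space_config[simp]: "space (config_space :: (int \<Rightarrow> 'a) measure) = UNIV"
  by (simp add: config_space_def space_PiM)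

definition box :: "int set \<Rightarrow> (int \<Rightarrow> 'r set) \<Rightarrow> (int \<Rightarrow> 'r) set" where
  "box J B = {s. \<forall>i\<in>J. s i \<in> B i}"

lemma box_cong: "(\<And>i. i \<in> J \<Longrightarrow> B i = B' i) \<Longrightarrow> box J B = box J B'"
  by (auto simp: box_def)

lemma box_sets: assumes "finite J" shows "box J B \<in> sets (bernoulli_unif :: (int \<Rightarrow> 'r::finite) measure)"
proof -
  have "box J B = prod_emb UNIV (\<lambda>_. count_space (UNIV::'r set)) J (PiE J B)"
    by (auto simp: box_def prod_emb_def PiE_iff)
  moreover have "\<dots> \<in> sets (PiM UNIV (\<lambda>_. count_space (UNIV::'r set)))"
    using assms by (intro sets_PiM_I) auto
  ultimately show ?thesis by (simp add: sets_bern)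
qed

definition hh :: "((int \<Rightarrow> 'r::finite) \<Rightarrow> (int \<Rightarrow> 'q)) \<Rightarrow> (int \<Rightarrow> 'r) set \<Rightarrow> (int \<Rightarrow> 'q) \<Rightarrow> ennreal" where
  "hh G A = RN_deriv (distr bernoulli_unif config_space G) (distr (density bernoulli_unif (indicator A)) config_space G)"

lemma hh_meas[measurable]: "hh G A \<in> borel_measurable (distr bernoulli_unif config_space G)"
  unfolding hh_def by simp

lemma hh_char:
  fixes G :: "(int \<Rightarrow> 'r::finite) \<Rightarrow> (int \<Rightarrow> 'q)"
  assumes G: "G \<in> measurable bernoulli_unif config_space" and A: "A \<in> sets bernoulli_unif"
    and B: "B \<in> sets config_space"
  shows "(\<integral>\<^sup>+x. hh G A x * indicator B x \<partial>distr bernoulli_unif config_space G) = emeasure bernoulli_unif (A \<inter> G -` B)"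
proof -
  let ?N = "bernoulli_unif :: (int \<Rightarrow> 'r) measure"
  let ?mu = "distr ?N config_space G"
  let ?K = "distr (density ?N (indicator A)) config_space G"
  interpret P: prob_space ?N by (rule prob_bern)
  interpret M: prob_space ?mu by (rule P.prob_space_distr[OF G])
  have Gd: "G \<in> measurable (density ?N (indicator A)) config_space" using G by simp
  have K: "emeasure ?K X = emeasure ?N (A \<inter> G -` X)" if X: "X \<in> sets config_space" for X
  proof -
    have "G -` X \<in> sets ?N" using measurable_sets[OF G X] by simp
    then show ?thesis using X
      by (simp add: emeasure_distr[OF Gd X] emeasure_restricted[OF A])
  qed
  have ac: "absolutely_continuous ?mu ?K"
    unfolding absolutely_continuous_def
  proof
    fix X assume X: "X \<in> null_sets ?mu"
    then have Xs: "X \<in> sets config_space" and "emeasure ?mu X = 0" by auto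
    then have "emeasure ?N (G -` X) = 0" by (simp add: emeasure_distr[OF G])
    moreover have "G -` X \<in> sets ?N" using measurable_sets[OF G Xs] by simp
    ultimately have "emeasure ?N (A \<inter> G -` X) = 0"
      by (metis (no_types) emeasure_eq_0 inf_le2 sets.Int A)
    then show "X \<in> null_sets ?K" using Xs K by (simp add: null_sets_def)
  qed
  have "density ?mu (hh G A) = ?K"
    unfolding hh_def by (rule M.density_RN_deriv[OF ac]) simp
  then have "emeasure (density ?mu (hh G A)) B = emeasure ?K B" by simp
  then show ?thesis using B
    by (simp add: emeasure_density K)
qed

lemma sets_top_bern: "UNIV \<in> sets (bernoulli_unif :: (int \<Rightarrow> 'r::finite) measure)"
  using sets.top[of "bernoulli_unif :: (int \<Rightarrow> 'r::finite) measure"] by simp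

lemma hh_sum:
  fixes G :: "(int \<Rightarrow> 'r::finite) \<Rightarrow> (int \<Rightarrow> 'q)" and A :: "'i \<Rightarrow> (int \<Rightarrow> 'r) set"
  assumes G: "G \<in> measurable bernoulli_unif config_space" and S: "finite S"
    and A: "\<And>i. i \<in> S \<Longrightarrow> A i \<in> sets bernoulli_unif" and D: "disjoint_family_on A S"
  shows "AE x in distr bernoulli_unif config_space G. hh G (\<Union>i\<in>S. A i) x = (\<Sum>i\<in>S. hh G (A i) x)"
proof -
  let ?N = "bernoulli_unif :: (int \<Rightarrow> 'r) measure"
  let ?mu = "distr ?N config_space G"
  interpret P: prob_space ?N by (rule prob_bern)
  interpret M: prob_space ?mu by (rule P.prob_space_distr[OF G])
  have UA: "(\<Union>i\<in>S. A i) \<in> sets ?N" using A S by auto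
  have "density ?mu (hh G (\<Union>i\<in>S. A i)) = density ?mu (\<lambda>x. \<Sum>i\<in>S. hh G (A i) x)"
  proof (rule measure_eqI)
    fix B assume "B \<in> sets (density ?mu (hh G (\<Union>i\<in>S. A i)))"
    then have B: "B \<in> sets config_space" by simp
    have GB: "G -` B \<in> sets ?N" using measurable_sets[OF G B] by simp
    have "emeasure (density ?mu (\<lambda>x. \<Sum>i\<in>S. hh G (A i) x)) B
        = (\<integral>\<^sup>+x. (\<Sum>i\<in>S. hh G (A i) x * indicator B x) \<partial>?mu)"
      using B by (simp add: emeasure_density sum_distrib_right)
    also have "\<dots> = (\<Sum>i\<in>S. \<integral>\<^sup>+x. hh G (A i) x * indicator B x \<partial>?mu)"
      using B by (intro nn_integral_sum) simp
    also have "\<dots> = (\<Sum>i\<in>S. emeasure ?N (A i \<inter> G -` B))"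
      using hh_char[OF G A B] by simp
    also have "\<dots> = emeasure ?N (\<Union>i\<in>S. A i \<inter> G -` B)"
    proof (rule sum_emeasure)
      show "(\<lambda>i. A i \<inter> G -` B) ` S \<subseteq> sets ?N" using A GB by auto
      show "disjoint_family_on (\<lambda>i. A i \<inter> G -` B) S" using D
        unfolding disjoint_family_on_def by blast
    qed (rule S)
    also have "\<dots> = emeasure ?N ((\<Union>i\<in>S. A i) \<inter> G -` B)"
      by (rule arg_cong[where f="emeasure ?N"]) blast
    also have "\<dots> = emeasure (density ?mu (hh G (\<Union>i\<in>S. A i))) B"
      using B by (simp add: emeasure_density hh_char[OF G UA B])
    finally show "emeasure (density ?mu (hh G (\<Union>i\<in>S. A i))) B
        = emeasure (density ?mu (\<lambda>x. \<Sum>i\<in>S. hh G (A i) x)) B" by simp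
  qed simp
  note eq = this
  have "(\<lambda>x. \<Sum>i\<in>S. hh G (A i) x) \<in> borel_measurable ?mu"
    by (intro borel_measurable_sum) simp
  then show ?thesis
    by (rule M.density_unique[OF hh_meas _ eq])
qed


lemma hh_one:
  fixes G :: "(int \<Rightarrow> 'r::finite) \<Rightarrow> (int \<Rightarrow> 'q)"
  assumes G: "G \<in> measurable bernoulli_unif config_space"
  shows "AE x in distr bernoulli_unif config_space G. hh G UNIV x = 1"
proof -
  let ?N = "bernoulli_unif :: (int \<Rightarrow> 'r) measure"
  let ?mu = "distr ?N config_space G"
  interpret P: prob_space ?N by (rule prob_bern)
  interpret M: prob_space ?mu by (rule P.prob_space_distr[OF G])
  have "density ?mu (hh G UNIV) = density ?mu (\<lambda>_. 1)"
  proof (rule measure_eqI)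
    fix B assume "B \<in> sets (density ?mu (hh G UNIV))"
    then have B: "B \<in> sets config_space" by simp
    show "emeasure (density ?mu (hh G UNIV)) B = emeasure (density ?mu (\<lambda>_. 1)) B"
    proof -
      have "emeasure (density ?mu (hh G UNIV)) B = emeasure ?N (UNIV \<inter> G -` B)"
        using B by (simp add: emeasure_density hh_char[OF G sets_top_bern B])
      also have "\<dots> = emeasure ?mu B"
        using B by (simp add: emeasure_distr[OF G B])
      also have "\<dots> = emeasure (density ?mu (\<lambda>_. 1)) B"
        using B by (simp add: emeasure_density)
      finally show ?thesis .
    qed
  qed simp
  note eq = this
  show ?thesis
    by (rule M.density_unique[OF hh_meas _ eq]) simp
qed

lemma hh_zero:
  fixes G :: "(int \<Rightarrow> 'r::finite) \<Rightarrow> (int \<Rightarrow> 'q)"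
  assumes G: "G \<in> measurable bernoulli_unif config_space" and A: "A \<in> sets bernoulli_unif"
    and B: "B \<in> sets config_space" and E: "A \<inter> G -` B = {}"
  shows "AE x in distr bernoulli_unif config_space G. x \<in> B \<longrightarrow> hh G A x = 0"
proof -
  have "(\<integral>\<^sup>+x. hh G A x * indicator B x \<partial>distr bernoulli_unif config_space G) = 0"
    using hh_char[OF G A B] E by simp
  then have "AE x in distr bernoulli_unif config_space G. hh G A x * indicator B x = 0"
    using B by (subst (asm) nn_integral_0_iff_AE) auto
  then show ?thesis by eventually_elim (auto simp: indicator_def)
qed

lemma hh_total:
  fixes G :: "(int \<Rightarrow> 'r::finite) \<Rightarrow> (int \<Rightarrow> 'q)"
  assumes G: "G \<in> measurable bernoulli_unif config_space" and A: "A \<in> sets bernoulli_unif"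
  shows "(\<integral>\<^sup>+x. hh G A x \<partial>distr bernoulli_unif config_space G) = emeasure bernoulli_unif A"
  using hh_char[OF G A, of UNIV] sets.top[of "config_space :: (int \<Rightarrow> 'q) measure"] by simp




lemma in_discrete_image: "x \<in> discrete ` S \<longleftrightarrow> of_discrete x \<in> S"
  by (metis UNIV_I discrete_inverse image_iff of_discrete_inverse)

instance discrete :: (finite) finite
proof
  have "UNIV = discrete ` (UNIV :: 'a set)"
    by (auto simp: in_discrete_image)
  then show "finite (UNIV :: 'a discrete set)" by (metis finite finite_imageI)
qed

lemma sets_borel_discrete[simp]: "S \<in> sets (borel :: ('a::countable) discrete measure)"
  by (simp add: open_discrete borel_open)

lemma measurable_from_borel_discrete[measurable]:
  "f \<in> measurable (borel :: ('a::countable) discrete measure) (count_space UNIV)"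
  unfolding measurable_def by auto

lemma space_PiM_borel_discrete[simp]:
  "space (PiM J (\<lambda>_. borel :: ('a::countable) discrete measure)) = PiE J (\<lambda>_. UNIV)"
  by (simp add: space_PiM)

lemma box_union: "box J B = (\<Union>b\<in>PiE J B. box J (\<lambda>i. {b i}))"
proof
  show "box J B \<subseteq> (\<Union>b\<in>PiE J B. box J (\<lambda>i. {b i}))"
  proof
    fix s assume "s \<in> box J B"
    then have "restrict s J \<in> PiE J B" "s \<in> box J (\<lambda>i. {restrict s J i})"
      by (auto simp: box_def)
    then show "s \<in> (\<Union>b\<in>PiE J B. box J (\<lambda>i. {b i}))" by blast
  qed
qed (auto simp: box_def PiE_iff)

lemma box_disj: "disjoint_family_on (\<lambda>b. box J (\<lambda>i. {b i})) (PiE J B)"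
  unfolding disjoint_family_on_def
proof (intro ballI impI)
  fix b b' assume b: "b \<in> PiE J B" "b' \<in> PiE J B" "b \<noteq> b'"
  then obtain i where "i \<in> J" "b i \<noteq> b' i"
    by (metis PiE_ext)
  then show "box J (\<lambda>i. {b i}) \<inter> box J (\<lambda>i. {b' i}) = {}"
    by (auto simp: box_def)
qed

lemma hh_box_sum:
  fixes G :: "(int \<Rightarrow> 'r::finite) \<Rightarrow> (int \<Rightarrow> 'q)"
  assumes G: "G \<in> measurable bernoulli_unif config_space" and J: "finite J"
  shows "AE x in distr bernoulli_unif config_space G.
     hh G (box J B) x = (\<Sum>b\<in>PiE J B. hh G (box J (\<lambda>i. {b i})) x)"
proof -
  have "finite (PiE J B)" using J by (intro finite_PiE) auto
  from hh_sum[OF G this box_sets[OF J] box_disj]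
  show ?thesis by (simp add: box_union[symmetric])
qed

lemma sum_pairs:
  fixes f :: "(int \<Rightarrow> 'a) \<Rightarrow> 'c::comm_semiring_1" and g :: "(int \<Rightarrow> 'b) \<Rightarrow> 'c"
  assumes f: "\<And>b b'. (\<And>i. i \<in> J \<Longrightarrow> b i = b' i) \<Longrightarrow> f b = f b'"
    and g: "\<And>b b'. (\<And>i. i \<in> J \<Longrightarrow> b i = b' i) \<Longrightarrow> g b = g b'"
  shows "(\<Sum>a\<in>PiE J (\<lambda>i. discrete ` (B1 i \<times> B2 i)). f (\<lambda>i. fst (of_discrete (a i))) * g (\<lambda>i. snd (of_discrete (a i))))
       = (\<Sum>b\<in>PiE J B1. f b) * (\<Sum>b\<in>PiE J B2. g b)"
proof -
  define \<phi> where "\<phi> = (\<lambda>(b1::int \<Rightarrow> 'a, b2::int \<Rightarrow> 'b). restrict (\<lambda>i. discrete (b1 i, b2 i)) J)"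
  define \<psi> where "\<psi> = (\<lambda>a::int \<Rightarrow> ('a \<times> 'b) discrete. (restrict (\<lambda>i. fst (of_discrete (a i))) J, restrict (\<lambda>i. snd (of_discrete (a i))) J))"
  let ?X = "PiE J (\<lambda>i. discrete ` (B1 i \<times> B2 i))"
  have bij: "bij_betw \<phi> (PiE J B1 \<times> PiE J B2) ?X"
  proof (rule bij_betw_byWitness[where f'=\<psi>])
    show "\<forall>a\<in>PiE J B1 \<times> PiE J B2. \<psi> (\<phi> a) = a"
      by (auto simp: \<phi>_def \<psi>_def discrete_inverse fun_eq_iff PiE_iff extensional_def)
    show "\<forall>a'\<in>?X. \<phi> (\<psi> a') = a'"
      by (auto simp: \<phi>_def \<psi>_def of_discrete_inverse fun_eq_iff PiE_iff extensional_def)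
    show "\<phi> ` (PiE J B1 \<times> PiE J B2) \<subseteq> ?X"
      by (auto simp: \<phi>_def PiE_iff)
    show "\<psi> ` ?X \<subseteq> PiE J B1 \<times> PiE J B2"
      by (auto simp: \<psi>_def PiE_iff in_discrete_image mem_Times_iff)
  qed
  have "(\<Sum>b\<in>PiE J B1. f b) * (\<Sum>b\<in>PiE J B2. g b) = (\<Sum>p\<in>PiE J B1 \<times> PiE J B2. f (fst p) * g (snd p))"
    by (simp add: sum_product sum.cartesian_product case_prod_beta)
  also have "\<dots> = (\<Sum>p\<in>PiE J B1 \<times> PiE J B2. (\<lambda>a. f (\<lambda>i. fst (of_discrete (a i))) * g (\<lambda>i. snd (of_discrete (a i)))) (\<phi> p))"
  proof (intro sum.cong refl)
    fix p assume "p \<in> PiE J B1 \<times> PiE J B2"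
    obtain b1 b2 where p: "p = (b1, b2)" by force
    have "f (\<lambda>i. fst (of_discrete (\<phi> p i))) = f b1"
      by (rule f) (simp add: p \<phi>_def discrete_inverse)
    moreover have "g (\<lambda>i. snd (of_discrete (\<phi> p i))) = g b2"
      by (rule g) (simp add: p \<phi>_def discrete_inverse)
    ultimately show "f (fst p) * g (snd p) = (\<lambda>a. f (\<lambda>i. fst (of_discrete (a i))) * g (\<lambda>i. snd (of_discrete (a i)))) (\<phi> p)"
      by (simp add: p)
  qed
  also have "\<dots> = (\<Sum>a\<in>?X. f (\<lambda>i. fst (of_discrete (a i))) * g (\<lambda>i. snd (of_discrete (a i))))"
    by (rule sum.reindex_bij_betw[OF bij])
  finally show ?thesis by simp
qed

locale cpl =
  fixes G1 :: "(int \<Rightarrow> 'r1::finite) \<Rightarrow> (int \<Rightarrow> 'q::finite)"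
    and G2 :: "(int \<Rightarrow> 'r2::finite) \<Rightarrow> (int \<Rightarrow> 'q)"
  assumes G1: "G1 \<in> measurable bernoulli_unif config_space"
    and G2: "G2 \<in> measurable bernoulli_unif config_space"
    and eqd: "distr bernoulli_unif config_space G1 = distr bernoulli_unif config_space G2"
begin

abbreviation "mu \<equiv> distr bernoulli_unif config_space G1"

lemma prob_mu: "prob_space mu"
  using prob_space.prob_space_distr[OF prob_bern G1] .

definition w :: "int set \<Rightarrow> (int \<Rightarrow> ('r1 \<times> 'r2) discrete) \<Rightarrow> ennreal" where
  "w J a = (\<integral>\<^sup>+x. hh G1 (box J (\<lambda>i. {fst (of_discrete (a i))})) x
                 * hh G2 (box J (\<lambda>i. {snd (of_discrete (a i))})) x \<partial>mu)"

definition PP :: "int set \<Rightarrow> (int \<Rightarrow> ('r1 \<times> 'r2) discrete) measure" where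
  "PP J = distr (density (count_space (PiE J (\<lambda>_. UNIV))) (w J)) (PiM J (\<lambda>_. borel)) (\<lambda>x. x)"

lemma sets_PP[simp]: "sets (PP J) = sets (PiM J (\<lambda>_. borel))"
  by (simp add: PP_def)

lemma space_PP[simp]: "space (PP J) = PiE J (\<lambda>_. UNIV)"
  by (simp add: PP_def)

lemma PP_emeasure:
  assumes J: "finite J" and X: "X \<in> sets (PiM J (\<lambda>_. borel))"
  shows "emeasure (PP J) X = (\<Sum>a\<in>X. w J a)"
proof -
  have Xs: "X \<subseteq> PiE J (\<lambda>_. UNIV)" using sets.sets_into_space[OF X] by simp
  have fin: "finite (PiE J (\<lambda>_. UNIV :: ('r1 \<times> 'r2) discrete set))" using J by (intro finite_PiE) auto
  have m: "(\<lambda>x. x) \<in> measurable (density (count_space (PiE J (\<lambda>_. UNIV))) (w J)) (PiM J (\<lambda>_. borel :: ('r1 \<times> 'r2) discrete measure))"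
    by simp
  have "emeasure (PP J) X = emeasure (density (count_space (PiE J (\<lambda>_. UNIV))) (w J)) X"
    unfolding PP_def using Xs by (simp add: emeasure_distr[OF m X] Int_absorb2)
  also have "\<dots> = (\<Sum>a\<in>PiE J (\<lambda>_. UNIV). w J a * indicator X a)"
    using Xs by (simp add: emeasure_density nn_integral_count_space_finite[OF fin])
  also have "\<dots> = (\<Sum>a\<in>X. w J a)"
  proof -
    have "(\<Sum>a\<in>PiE J (\<lambda>_. UNIV). w J a * indicator X a) = (\<Sum>a\<in>PiE J (\<lambda>_. UNIV). if a \<in> X then w J a else 0)"
      by (intro sum.cong) (auto simp: indicator_def)
    also have "\<dots> = (\<Sum>a\<in>PiE J (\<lambda>_. UNIV) \<inter> X. w J a)"
      using fin by (simp add: sum.inter_restrict)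
    finally show ?thesis using Xs by (simp add: Int_absorb1)
  qed
  finally show ?thesis .
qed

lemma hh2_meas[measurable]: "hh G2 A \<in> borel_measurable mu"
  using hh_meas[of G2 A] eqd by simp

lemma PP_box:
  assumes J: "finite J"
  shows "emeasure (PP J) (PiE J (\<lambda>i. discrete ` (B1 i \<times> B2 i)))
     = (\<integral>\<^sup>+x. hh G1 (box J B1) x * hh G2 (box J B2) x \<partial>mu)"
proof -
  let ?X = "PiE J (\<lambda>i. discrete ` (B1 i \<times> B2 i))"
  have X: "?X \<in> sets (PiM J (\<lambda>_. borel))"
    using J by (intro sets_PiM_I_finite) auto
  have "emeasure (PP J) ?X = (\<Sum>a\<in>?X. w J a)"
    by (rule PP_emeasure[OF J X])
  also have "\<dots> = (\<integral>\<^sup>+x. (\<Sum>a\<in>?X. hh G1 (box J (\<lambda>i. {fst (of_discrete (a i))})) x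
                 * hh G2 (box J (\<lambda>i. {snd (of_discrete (a i))})) x) \<partial>mu)"
    unfolding w_def by (rule nn_integral_sum[symmetric]) simp
  also have "\<dots> = (\<integral>\<^sup>+x. (\<Sum>b\<in>PiE J B1. hh G1 (box J (\<lambda>i. {b i})) x)
                 * (\<Sum>b\<in>PiE J B2. hh G2 (box J (\<lambda>i. {b i})) x) \<partial>mu)"
  proof (intro nn_integral_cong)
    fix x
    show "(\<Sum>a\<in>?X. hh G1 (box J (\<lambda>i. {fst (of_discrete (a i))})) x
                 * hh G2 (box J (\<lambda>i. {snd (of_discrete (a i))})) x)
        = (\<Sum>b\<in>PiE J B1. hh G1 (box J (\<lambda>i. {b i})) x)
                 * (\<Sum>b\<in>PiE J B2. hh G2 (box J (\<lambda>i. {b i})) x)"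
      by (rule sum_pairs[where f="\<lambda>b. hh G1 (box J (\<lambda>i. {b i})) x" and g="\<lambda>b. hh G2 (box J (\<lambda>i. {b i})) x"])
         (metis (mono_tags, lifting) box_cong)+
  qed
  also have "\<dots> = (\<integral>\<^sup>+x. hh G1 (box J B1) x * hh G2 (box J B2) x \<partial>mu)"
  proof (rule nn_integral_cong_AE)
    have a1: "AE x in mu. hh G1 (box J B1) x = (\<Sum>b\<in>PiE J B1. hh G1 (box J (\<lambda>i. {b i})) x)"
      by (rule hh_box_sum[OF G1 J])
    have a2: "AE x in mu. hh G2 (box J B2) x = (\<Sum>b\<in>PiE J B2. hh G2 (box J (\<lambda>i. {b i})) x)"
      unfolding eqd by (rule hh_box_sum[OF G2 J])
    from a1 a2 show "AE x in mu. (\<Sum>b\<in>PiE J B1. hh G1 (box J (\<lambda>i. {b i})) x)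
                 * (\<Sum>b\<in>PiE J B2. hh G2 (box J (\<lambda>i. {b i})) x) = hh G1 (box J B1) x * hh G2 (box J B2) x"
      by eventually_elim simp
  qed
  finally show ?thesis .
qed

end



lemma range_discrete: "range discrete = UNIV"
  by (auto simp: in_discrete_image)

context cpl begin

lemma PP_space1: "finite J \<Longrightarrow> emeasure (PP J) (space (PP J)) = 1"
proof -
  assume J: "finite J"
  have sp: "space (PP J) = PiE J (\<lambda>i. discrete ` (UNIV \<times> UNIV))"
    by (simp add: range_discrete)
  have bx: "box J (\<lambda>_. UNIV) = UNIV" by (simp add: box_def)
  have "emeasure (PP J) (space (PP J)) = (\<integral>\<^sup>+x. hh G1 UNIV x * hh G2 UNIV x \<partial>mu)"
    by (simp only: sp PP_box[OF J] bx)
  also have "\<dots> = (\<integral>\<^sup>+x. 1 \<partial>mu)"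
  proof (rule nn_integral_cong_AE)
    have a1: "AE x in mu. hh G1 UNIV x = 1" by (rule hh_one[OF G1])
    have a2: "AE x in mu. hh G2 UNIV x = 1" unfolding eqd by (rule hh_one[OF G2])
    from a1 a2 show "AE x in mu. hh G1 UNIV x * hh G2 UNIV x = 1" by eventually_elim simp
  qed
  also have "\<dots> = 1" using prob_space.emeasure_space_1[OF prob_mu] by simp
  finally show ?thesis .
qed

lemma PP_proj:
  assumes JH: "J \<subseteq> H" and H: "finite H"
  shows "PP J = distr (PP H) (PiM J (\<lambda>_. borel)) (\<lambda>f. restrict f J)"
proof (rule measure_eqI)
  have J: "finite J" using JH H by (rule finite_subset)
  fix X assume "X \<in> sets (PP J)"
  then have X: "X \<in> sets (PiM J (\<lambda>_. borel))" by simp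
  have Xs: "X \<subseteq> PiE J (\<lambda>_. UNIV)" using sets.sets_into_space[OF X] by simp
  have finX: "finite X" using Xs J by (rule finite_subset[OF _ finite_PiE]) auto
  define B1 where "B1 a i = (if i \<in> J then {fst (of_discrete (a i))} else UNIV)" for a :: "int \<Rightarrow> ('r1 \<times> 'r2) discrete" and i
  define B2 where "B2 a i = (if i \<in> J then {snd (of_discrete (a i))} else UNIV)" for a :: "int \<Rightarrow> ('r1 \<times> 'r2) discrete" and i
  define E where "E a = PiE H (\<lambda>i. discrete ` (B1 a i \<times> B2 a i))" for a
  have E_eq: "E a = {b \<in> PiE H (\<lambda>_. UNIV). restrict b J = a}" if a: "a \<in> PiE J (\<lambda>_. UNIV)" for a
  proof -
    have key: "b \<in> discrete ` (B1 a i \<times> B2 a i) \<longleftrightarrow> (i \<in> J \<longrightarrow> b = a i)" for b i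
    proof (cases "i \<in> J")
      case True
      then have "B1 a i \<times> B2 a i = {of_discrete (a i)}" by (simp add: B1_def B2_def)
      then show ?thesis using True by (simp add: of_discrete_inverse)
    next
      case False
      then show ?thesis by (simp add: B1_def B2_def range_discrete)
    qed
    show ?thesis
    proof (intro equalityI subsetI)
      fix b assume "b \<in> E a"
      then have b: "b \<in> extensional H" "\<And>i. i \<in> H \<Longrightarrow> i \<in> J \<Longrightarrow> b i = a i"
        unfolding E_def PiE_iff key by auto
      have "restrict b J = a"
      proof
        fix i show "restrict b J i = a i"
          using a b JH by (cases "i \<in> J") (auto simp: PiE_iff extensional_def)
      qed
      then show "b \<in> {b \<in> PiE H (\<lambda>_. UNIV). restrict b J = a}" using b by (simp add: PiE_iff)
    next
      fix b assume "b \<in> {b \<in> PiE H (\<lambda>_. UNIV). restrict b J = a}"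
      then have "b \<in> extensional H" "restrict b J = a" by (auto simp: PiE_iff)
      then show "b \<in> E a" unfolding E_def PiE_iff key
        by (auto simp: fun_eq_iff split: if_splits)
    qed
  qed
  have m: "(\<lambda>f. restrict f J) \<in> measurable (PP H) (PiM J (\<lambda>_. borel :: ('r1 \<times> 'r2) discrete measure))"
    using JH by (simp add: measurable_cong_sets[OF sets_PP refl] measurable_restrict_subset)
  have pre: "(\<lambda>f. restrict f J) -` X \<inter> space (PP H) = (\<Union>a\<in>X. E a)"
  proof (intro equalityI subsetI)
    fix b assume b: "b \<in> (\<lambda>f. restrict f J) -` X \<inter> space (PP H)"
    then have "restrict b J \<in> X" by simp
    moreover have "b \<in> E (restrict b J)"
      using b E_eq[of "restrict b J"] by auto
    ultimately show "b \<in> (\<Union>a\<in>X. E a)" by blast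
  next
    fix b assume "b \<in> (\<Union>a\<in>X. E a)"
    then obtain a where a: "a \<in> X" "b \<in> E a" by blast
    then show "b \<in> (\<lambda>f. restrict f J) -` X \<inter> space (PP H)"
      using E_eq[of a] Xs by auto
  qed
  have "emeasure (distr (PP H) (PiM J (\<lambda>_. borel)) (\<lambda>f. restrict f J)) X = emeasure (PP H) (\<Union>a\<in>X. E a)"
    by (subst emeasure_distr[OF m X]) (simp only: pre)
  also have "\<dots> = (\<Sum>a\<in>X. emeasure (PP H) (E a))"
  proof (rule sum_emeasure[symmetric])
    show "E ` X \<subseteq> sets (PP H)" unfolding E_def using H by (auto intro!: sets_PiM_I_finite)
    show "disjoint_family_on E X"
      unfolding disjoint_family_on_def
    proof (intro ballI impI)
      fix m n assume mn: "m \<in> X" "n \<in> X" "m \<noteq> n"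
      then have "m \<in> PiE J (\<lambda>_. UNIV)" "n \<in> PiE J (\<lambda>_. UNIV)" using Xs by auto
      then show "E m \<inter> E n = {}" using E_eq mn(3) by auto
    qed
  qed (rule finX)
  also have "\<dots> = (\<Sum>a\<in>X. w J a)"
  proof (intro sum.cong refl)
    fix a assume "a \<in> X"
    have "box H (B1 a) = box J (\<lambda>i. {fst (of_discrete (a i))})"
      using JH by (auto simp: box_def B1_def)
    moreover have "box H (B2 a) = box J (\<lambda>i. {snd (of_discrete (a i))})"
      using JH by (auto simp: box_def B2_def)
    ultimately show "emeasure (PP H) (E a) = w J a"
      unfolding E_def PP_box[OF H] w_def by simp
  qed
  also have "\<dots> = emeasure (PP J) X" by (rule PP_emeasure[OF J X, symmetric])
  finally show "emeasure (PP J) X = emeasure (distr (PP H) (PiM J (\<lambda>_. borel)) (\<lambda>f. restrict f J)) X" ..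
qed simp

end


sublocale cpl \<subseteq> PF: polish_projective "UNIV :: int set" PP
  unfolding polish_projective_def
proof (rule projective_family.intro)
  fix J H :: "int set"
  assume "J \<subseteq> H" "finite H" "H \<subseteq> UNIV"
  then show "PP J = distr (PP H) (PiM J (\<lambda>_. borel)) (\<lambda>f. restrict f J)" by (simp add: PP_proj)
next
  fix J :: "int set" assume "finite J" "J \<subseteq> UNIV"
  then show "prob_space (PP J)" by (intro prob_spaceI PP_space1)
qed




lemma comp_meas:
  fixes f :: "('a::countable) discrete \<Rightarrow> 'r::finite"
  shows "(\<lambda>s i. f (s i)) \<in> measurable (PiM UNIV (\<lambda>_. borel :: 'a discrete measure)) bernoulli_unif"
  unfolding measurable_cong_sets[OF refl sets_bern]
proof (rule measurable_PiM_single')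
  fix i :: int
  show "(\<lambda>s. f (s i)) \<in> measurable (PiM UNIV (\<lambda>_. borel :: 'a discrete measure)) (count_space UNIV)"
  proof -
    have "(\<lambda>s. s i) \<in> measurable (PiM UNIV (\<lambda>_. borel :: 'a discrete measure)) borel"
      by (rule measurable_component_singleton) simp
    from measurable_compose[OF this measurable_from_borel_discrete[of f]] show ?thesis .
  qed
qed simp

lemma emb_box: "prod_emb UNIV (\<lambda>_. count_space UNIV) J (PiE J A) = box J A"
  by (auto simp: prod_emb_iff box_def PiE_iff extensional_def)

context cpl begin

definition spl :: "(int \<Rightarrow> ('r1 \<times> 'r2) discrete) \<Rightarrow> (int \<Rightarrow> 'r1) \<times> (int \<Rightarrow> 'r2)" where
  "spl s = ((\<lambda>i. fst (of_discrete (s i))), (\<lambda>i. snd (of_discrete (s i))))"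

definition gam :: "((int \<Rightarrow> 'r1) \<times> (int \<Rightarrow> 'r2)) measure" where
  "gam = distr PF.lim (bernoulli_unif \<Otimes>\<^sub>M bernoulli_unif) spl"

lemma spl_meas: "spl \<in> measurable PF.lim (bernoulli_unif \<Otimes>\<^sub>M bernoulli_unif)"
  unfolding spl_def measurable_cong_sets[OF PF.sets_lim refl]
  by (intro measurable_Pair comp_meas)

lemma sets_gam[simp]: "sets gam = sets (bernoulli_unif \<Otimes>\<^sub>M bernoulli_unif)"
  by (simp add: gam_def)

lemma space_gam[simp]: "space gam = UNIV"
  by (simp add: gam_def space_pair_measure)

lemma prob_gam: "prob_space gam"
  unfolding gam_def by (rule prob_space.prob_space_distr[OF PF.P.prob_space_axioms spl_meas])

lemma gam_box:
  assumes J: "finite J"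
  shows "emeasure gam (box J B1 \<times> box J B2) = (\<integral>\<^sup>+x. hh G1 (box J B1) x * hh G2 (box J B2) x \<partial>mu)"
proof -
  have X: "box J B1 \<times> box J B2 \<in> sets (bernoulli_unif \<Otimes>\<^sub>M bernoulli_unif)"
    using J by (intro pair_measureI box_sets)
  have Y: "PiE J (\<lambda>i. discrete ` (B1 i \<times> B2 i)) \<in> sets (PiM J (\<lambda>_. borel))"
    using J by (intro sets_PiM_I_finite) auto
  have pre: "spl -` (box J B1 \<times> box J B2) \<inter> space PF.lim
      = prod_emb UNIV (\<lambda>_. borel) J (PiE J (\<lambda>i. discrete ` (B1 i \<times> B2 i)))"
    by (auto simp: spl_def box_def prod_emb_iff PiE_iff in_discrete_image mem_Times_iff extensional_def)
  have "emeasure gam (box J B1 \<times> box J B2) = emeasure PF.lim (prod_emb UNIV (\<lambda>_. borel) J (PiE J (\<lambda>i. discrete ` (B1 i \<times> B2 i))))"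
    unfolding gam_def by (subst emeasure_distr[OF spl_meas X]) (simp only: pre)
  also have "\<dots> = emeasure (PP J) (PiE J (\<lambda>i. discrete ` (B1 i \<times> B2 i)))"
    using J Y by (intro PF.emeasure_lim_emb) auto
  also have "\<dots> = (\<integral>\<^sup>+x. hh G1 (box J B1) x * hh G2 (box J B2) x \<partial>mu)"
    by (rule PP_box[OF J])
  finally show ?thesis .
qed

lemma box_UNIV: "box J (\<lambda>_. UNIV) = UNIV"
  by (simp add: box_def)

lemma marg1: "distr gam bernoulli_unif fst = bernoulli_unif"
proof (rule measure_eqI_PiM_infinite[where I=UNIV and M="\<lambda>_. count_space UNIV"])
  show "sets (distr gam bernoulli_unif fst) = sets (PiM UNIV (\<lambda>_. count_space UNIV))"
    by (simp add: sets_bern)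
  show "sets (bernoulli_unif :: (int \<Rightarrow> 'r1) measure) = sets (PiM UNIV (\<lambda>_. count_space UNIV))"
    by (simp add: sets_bern)
  have mf: "fst \<in> measurable gam (bernoulli_unif :: (int \<Rightarrow> 'r1) measure)"
    by (simp add: measurable_cong_sets[OF sets_gam refl])
  show "finite_measure (distr gam bernoulli_unif fst)"
    using prob_space.prob_space_distr[OF prob_gam mf] by (simp add: prob_space_def)
  fix J :: "int set" and A assume J: "finite J" "J \<subseteq> UNIV" and A: "\<And>i. i \<in> J \<Longrightarrow> A i \<in> sets (count_space (UNIV :: 'r1 set))"
  have bs: "box J A \<in> sets (bernoulli_unif :: (int \<Rightarrow> 'r1) measure)" using J by (simp add: box_sets)
  have "emeasure (distr gam bernoulli_unif fst) (box J A) = emeasure gam (box J A \<times> box J (\<lambda>_. UNIV))"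
    by (simp add: emeasure_distr[OF mf bs] box_UNIV vimage_fst)
  also have "\<dots> = (\<integral>\<^sup>+x. hh G1 (box J A) x * hh G2 UNIV x \<partial>mu)"
    using gam_box[OF J(1), of A "\<lambda>_. UNIV"] by (simp add: box_UNIV)
  also have "\<dots> = (\<integral>\<^sup>+x. hh G1 (box J A) x \<partial>mu)"
  proof (rule nn_integral_cong_AE)
    have "AE x in mu. hh G2 UNIV x = 1" unfolding eqd by (rule hh_one[OF G2])
    then show "AE x in mu. hh G1 (box J A) x * hh G2 UNIV x = hh G1 (box J A) x"
      by eventually_elim simp
  qed
  also have "\<dots> = emeasure bernoulli_unif (box J A)"
    by (rule hh_total[OF G1 bs])
  finally show "emeasure (distr gam bernoulli_unif fst) (prod_emb UNIV (\<lambda>_. count_space UNIV) J (PiE J A))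
      = emeasure bernoulli_unif (prod_emb UNIV (\<lambda>_. count_space UNIV) J (PiE J A))"
    by (simp add: emb_box)
qed

lemma marg2: "distr gam bernoulli_unif snd = bernoulli_unif"
proof (rule measure_eqI_PiM_infinite[where I=UNIV and M="\<lambda>_. count_space UNIV"])
  show "sets (distr gam bernoulli_unif snd) = sets (PiM UNIV (\<lambda>_. count_space UNIV))"
    by (simp add: sets_bern)
  show "sets (bernoulli_unif :: (int \<Rightarrow> 'r2) measure) = sets (PiM UNIV (\<lambda>_. count_space UNIV))"
    by (simp add: sets_bern)
  have mf: "snd \<in> measurable gam (bernoulli_unif :: (int \<Rightarrow> 'r2) measure)"
    by (simp add: measurable_cong_sets[OF sets_gam refl])
  show "finite_measure (distr gam bernoulli_unif snd)"
    using prob_space.prob_space_distr[OF prob_gam mf] by (simp add: prob_space_def)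
  fix J :: "int set" and A assume J: "finite J" "J \<subseteq> UNIV" and A: "\<And>i. i \<in> J \<Longrightarrow> A i \<in> sets (count_space (UNIV :: 'r2 set))"
  have bs: "box J A \<in> sets (bernoulli_unif :: (int \<Rightarrow> 'r2) measure)" using J by (simp add: box_sets)
  have "emeasure (distr gam bernoulli_unif snd) (box J A) = emeasure gam (box J (\<lambda>_. UNIV) \<times> box J A)"
    by (simp add: emeasure_distr[OF mf bs] box_UNIV vimage_snd)
  also have "\<dots> = (\<integral>\<^sup>+x. hh G1 UNIV x * hh G2 (box J A) x \<partial>mu)"
    using gam_box[OF J(1), of "\<lambda>_. UNIV" A] by (simp add: box_UNIV)
  also have "\<dots> = (\<integral>\<^sup>+x. hh G2 (box J A) x \<partial>mu)"
  proof (rule nn_integral_cong_AE)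
    have "AE x in mu. hh G1 UNIV x = 1" by (rule hh_one[OF G1])
    then show "AE x in mu. hh G1 UNIV x * hh G2 (box J A) x = hh G2 (box J A) x"
      by eventually_elim simp
  qed
  also have "\<dots> = emeasure bernoulli_unif (box J A)"
    unfolding eqd by (rule hh_total[OF G2 bs])
  finally show "emeasure (distr gam bernoulli_unif snd) (prod_emb UNIV (\<lambda>_. count_space UNIV) J (PiE J A))
      = emeasure bernoulli_unif (prod_emb UNIV (\<lambda>_. count_space UNIV) J (PiE J A))"
    by (simp add: emb_box)
qed

lemma gam_coupling: "is_coupling gam bernoulli_unif bernoulli_unif"
  unfolding is_coupling_def
proof (intro conjI ballI)
  show "prob_space gam" by (rule prob_gam)
  show "sets gam = sets (bernoulli_unif \<Otimes>\<^sub>M bernoulli_unif)" by simp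
  fix E1 assume E1: "E1 \<in> sets (bernoulli_unif :: (int \<Rightarrow> 'r1) measure)"
  have mf: "fst \<in> measurable gam (bernoulli_unif :: (int \<Rightarrow> 'r1) measure)"
    by (simp add: measurable_cong_sets[OF sets_gam refl])
  have "emeasure gam (E1 \<times> space bernoulli_unif) = emeasure (distr gam bernoulli_unif fst) E1"
    by (simp add: emeasure_distr[OF mf E1] vimage_fst)
  then show "emeasure gam (E1 \<times> space bernoulli_unif) = emeasure bernoulli_unif E1"
    by (simp add: marg1)
next
  fix E2 assume E2: "E2 \<in> sets (bernoulli_unif :: (int \<Rightarrow> 'r2) measure)"
  have mf: "snd \<in> measurable gam (bernoulli_unif :: (int \<Rightarrow> 'r2) measure)"
    by (simp add: measurable_cong_sets[OF sets_gam refl])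
  have "emeasure gam (space bernoulli_unif \<times> E2) = emeasure (distr gam bernoulli_unif snd) E2"
    by (simp add: emeasure_distr[OF mf E2] vimage_snd)
  then show "emeasure gam (space bernoulli_unif \<times> E2) = emeasure bernoulli_unif E2"
    by (simp add: marg2)
qed

end



lemma coord_neq_sets: "{x :: int \<Rightarrow> 'q. x z \<noteq> q} \<in> sets config_space"
proof -
  have m: "(\<lambda>x :: int \<Rightarrow> 'q. x z) \<in> measurable config_space (count_space UNIV)"
    unfolding config_space_def by (rule measurable_component_singleton) simp
  have "(\<lambda>x :: int \<Rightarrow> 'q. x z) -` (UNIV - {q}) \<inter> space config_space \<in> sets config_space"
    by (rule measurable_sets[OF m]) simp
  moreover have "(\<lambda>x :: int \<Rightarrow> 'q. x z) -` (UNIV - {q}) \<inter> space config_space = {x. x z \<noteq> q}"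
    by auto
  ultimately show ?thesis by simp
qed

context cpl begin

lemma gam_conc:
  assumes W: "\<And>z. finite (W z)"
    and w1: "\<And>z s s'. (\<And>i. i \<in> W z \<Longrightarrow> s i = s' i) \<Longrightarrow> G1 s z = G1 s' z"
    and w2: "\<And>z s s'. (\<And>i. i \<in> W z \<Longrightarrow> s i = s' i) \<Longrightarrow> G2 s z = G2 s' z"
  shows "emeasure gam {(s1, s2). G1 s1 = G2 s2} = 1"
proof -
  define Bad where "Bad z = {a \<in> PiE (W z) (\<lambda>_. UNIV). \<exists>s1 s2. (\<forall>i\<in>W z. s1 i = fst (of_discrete (a i)) \<and> s2 i = snd (of_discrete (a i))) \<and> G1 s1 z \<noteq> G2 s2 z}" for z
  define T where "T z a = box (W z) (\<lambda>i. {fst (of_discrete (a i))}) \<times> box (W z) (\<lambda>i. {snd (of_discrete (a i))})"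
    for z and a :: "int \<Rightarrow> ('r1 \<times> 'r2) discrete"
  have S_eq: "{(s1, s2). G1 s1 = G2 s2} = UNIV - (\<Union>z. \<Union>a\<in>Bad z. T z a)"
  proof (intro equalityI subsetI)
    fix p assume "p \<in> {(s1, s2). G1 s1 = G2 s2}"
    then obtain s1 s2 where p: "p = (s1, s2)" "G1 s1 = G2 s2" by auto
    have "p \<notin> T z a" if "a \<in> Bad z" for z a
    proof
      assume pT: "p \<in> T z a"
      from that obtain t1 t2 where t: "\<forall>i\<in>W z. t1 i = fst (of_discrete (a i)) \<and> t2 i = snd (of_discrete (a i))"
        "G1 t1 z \<noteq> G2 t2 z" unfolding Bad_def by blast
      have "G1 s1 z = G1 t1 z" using pT t(1) by (intro w1) (auto simp: p T_def box_def)
      moreover have "G2 s2 z = G2 t2 z" using pT t(1) by (intro w2) (auto simp: p T_def box_def)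
      ultimately show False using t(2) p(2) by simp
    qed
    then show "p \<in> UNIV - (\<Union>z. \<Union>a\<in>Bad z. T z a)" by blast
  next
    fix p assume p: "p \<in> UNIV - (\<Union>z. \<Union>a\<in>Bad z. T z a)"
    obtain s1 s2 where ps: "p = (s1, s2)" by force
    show "p \<in> {(s1, s2). G1 s1 = G2 s2}"
    proof (rule ccontr)
      assume "p \<notin> {(s1, s2). G1 s1 = G2 s2}"
      then obtain z where z: "G1 s1 z \<noteq> G2 s2 z" using ps by (auto simp: fun_eq_iff)
      define a where "a = restrict (\<lambda>i. discrete (s1 i, s2 i)) (W z)"
      have "a \<in> Bad z" unfolding Bad_def a_def using z
        by (auto simp: discrete_inverse intro!: exI[of _ s1] exI[of _ s2])
      moreover have "p \<in> T z a" by (auto simp: ps T_def box_def a_def discrete_inverse)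
      ultimately show False using p by blast
    qed
  qed
  have null: "T z a \<in> null_sets gam" if a: "a \<in> Bad z" for z a
  proof -
    from a obtain t1 t2 where t: "\<forall>i\<in>W z. t1 i = fst (of_discrete (a i)) \<and> t2 i = snd (of_discrete (a i))"
      "G1 t1 z \<noteq> G2 t2 z" unfolding Bad_def by blast
    let ?C1 = "box (W z) (\<lambda>i. {fst (of_discrete (a i))})"
    let ?C2 = "box (W z) (\<lambda>i. {snd (of_discrete (a i))})"
    have e1: "?C1 \<inter> G1 -` {x. x z \<noteq> G1 t1 z} = {}"
    proof -
      have "G1 s z = G1 t1 z" if "s \<in> ?C1" for s
        using that t(1) by (intro w1) (auto simp: box_def)
      then show ?thesis by auto
    qed
    have e2: "?C2 \<inter> G2 -` {x. x z \<noteq> G2 t2 z} = {}"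
    proof -
      have "G2 s z = G2 t2 z" if "s \<in> ?C2" for s
        using that t(1) by (intro w2) (auto simp: box_def)
      then show ?thesis by auto
    qed
    have A1: "AE x in mu. x \<in> {x. x z \<noteq> G1 t1 z} \<longrightarrow> hh G1 ?C1 x = 0"
      by (rule hh_zero[OF G1 box_sets[OF W] coord_neq_sets e1])
    have A2: "AE x in mu. x \<in> {x. x z \<noteq> G2 t2 z} \<longrightarrow> hh G2 ?C2 x = 0"
      unfolding eqd by (rule hh_zero[OF G2 box_sets[OF W] coord_neq_sets e2])
    have "AE x in mu. hh G1 ?C1 x * hh G2 ?C2 x = 0"
      using A1 A2 by eventually_elim (use t(2) in auto)
    then have "(\<integral>\<^sup>+x. hh G1 ?C1 x * hh G2 ?C2 x \<partial>mu) = 0"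
      by (subst nn_integral_0_iff_AE) auto
    then have "emeasure gam (T z a) = 0"
      unfolding T_def by (simp add: gam_box[OF W])
    moreover have "T z a \<in> sets gam"
      unfolding T_def sets_gam by (intro pair_measureI box_sets W)
    ultimately show ?thesis by (simp add: null_sets_def)
  qed
  have N: "(\<Union>z. \<Union>a\<in>Bad z. T z a) \<in> null_sets gam"
  proof (rule null_sets_UN')
    fix z :: int
    have "finite (Bad z)" unfolding Bad_def using W[of z]
      by (intro finite_subset[OF _ finite_PiE[of "W z" "\<lambda>_. UNIV"]]) auto
    then show "(\<Union>a\<in>Bad z. T z a) \<in> null_sets gam"
      by (intro null_sets_UN' countable_finite null)
  qed simp
  interpret G: prob_space gam by (rule prob_gam)
  have "emeasure gam (space gam - (\<Union>z. \<Union>a\<in>Bad z. T z a)) = emeasure gam (space gam) - emeasure gam (\<Union>z. \<Union>a\<in>Bad z. T z a)"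
    using N by (intro emeasure_compl) auto
  moreover have "emeasure gam (\<Union>z. \<Union>a\<in>Bad z. T z a) = 0" using N by auto
  ultimately show ?thesis using G.emeasure_space_1 by (simp add: S_eq)
qed

end


lemma map_meas:
  "(\<lambda>s. map (\<lambda>v. s (g v)) L) \<in> measurable (bernoulli_unif :: (int \<Rightarrow> 'r::finite) measure) (count_space UNIV)"
proof (induction L)
  case Nil
  show ?case unfolding list.map by (rule measurable_const) (simp only: space_count_space UNIV_I)
next
  case (Cons v L)
  have c: "(\<lambda>s. s (g v)) \<in> measurable (bernoulli_unif :: (int \<Rightarrow> 'r) measure) (count_space UNIV)"
    unfolding measurable_cong_sets[OF sets_bern refl]
    by (rule measurable_component_singleton) simp
  have f: "(\<lambda>s. a # map (\<lambda>v. s (g v)) L) \<in> measurable (bernoulli_unif :: (int \<Rightarrow> 'r) measure) (count_space UNIV)" for a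
    by (rule measurable_compose[OF Cons.IH measurable_count_space])
  have "(\<lambda>s. (\<lambda>a s. a # map (\<lambda>v. s (g v)) L) (s (g v)) s) \<in> measurable (bernoulli_unif :: (int \<Rightarrow> 'r) measure) (count_space UNIV)"
    by (rule measurable_compose_countable'[OF f c]) (rule countable_finite[OF finite_class.finite_UNIV])
  then show ?case by (simp only: list.map)
qed
lemma eg_meas:
  fixes f :: "'q list \<Rightarrow> ('r::finite) list \<Rightarrow> 'q"
  shows "explicit_global V V' f c \<in> measurable bernoulli_unif config_space"
  unfolding explicit_global_def config_space_def
proof (rule measurable_PiM_single')
  fix z :: int
  have "(\<lambda>s. map (\<lambda>v. s (z + v)) V') \<in> measurable (bernoulli_unif :: (int \<Rightarrow> 'r) measure) (count_space UNIV)"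
    by (rule map_meas)
  from measurable_compose[OF this measurable_count_space]
  show "(\<lambda>s. f (map (\<lambda>v. c (z + v)) V) (map (\<lambda>v. s (z + v)) V')) \<in> measurable bernoulli_unif (count_space UNIV)" .
qed (simp only: space_count_space PiE_UNIV Pi_UNIV UNIV_I)
lemma coupling_imp_eq:
  fixes G1 :: "(int \<Rightarrow> 'r1::finite) \<Rightarrow> (int \<Rightarrow> 'q)" and G2 :: "(int \<Rightarrow> 'r2::finite) \<Rightarrow> (int \<Rightarrow> 'q)"
  assumes G1: "G1 \<in> measurable bernoulli_unif config_space"
    and G2: "G2 \<in> measurable bernoulli_unif config_space"
    and C: "is_coupling \<gamma> bernoulli_unif bernoulli_unif"
    and S: "emeasure \<gamma> {(s1, s2). G1 s1 = G2 s2} = 1"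
  shows "distr bernoulli_unif config_space G1 = distr bernoulli_unif config_space G2"
proof (rule measure_eqI)
  interpret P: prob_space \<gamma> using C by (simp add: is_coupling_def)
  have sg: "sets \<gamma> = sets (bernoulli_unif \<Otimes>\<^sub>M bernoulli_unif)" using C by (simp add: is_coupling_def)
  have Ss: "{(s1, s2). G1 s1 = G2 s2} \<in> sets \<gamma>"
    using S emeasure_notin_sets by force
  have AES: "AE p in \<gamma>. p \<in> {(s1, s2). G1 s1 = G2 s2}"
    using S Ss by (intro P.AE_prob_1) (simp add: measure_def)
  fix B assume "B \<in> sets (distr bernoulli_unif config_space G1)"
  then have B: "B \<in> sets config_space" by simp
  have B1: "G1 -` B \<in> sets (bernoulli_unif :: (int \<Rightarrow> 'r1) measure)" using measurable_sets[OF G1 B] by simp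
  have B2: "G2 -` B \<in> sets (bernoulli_unif :: (int \<Rightarrow> 'r2) measure)" using measurable_sets[OF G2 B] by simp
  have "emeasure (distr bernoulli_unif config_space G1) B = emeasure bernoulli_unif (G1 -` B)"
    by (simp add: emeasure_distr[OF G1 B])
  also have "\<dots> = emeasure \<gamma> (G1 -` B \<times> UNIV)"
    using C B1 by (simp add: is_coupling_def)
  also have "\<dots> = emeasure \<gamma> (UNIV \<times> G2 -` B)"
  proof (rule emeasure_eq_AE)
    show "AE x in \<gamma>. (x \<in> G1 -` B \<times> UNIV) = (x \<in> UNIV \<times> G2 -` B)"
      using AES by eventually_elim auto
    show "G1 -` B \<times> UNIV \<in> sets \<gamma>" unfolding sg using B1 sets_top_bern by (intro pair_measureI)
    show "UNIV \<times> G2 -` B \<in> sets \<gamma>" unfolding sg using B2 sets_top_bern by (intro pair_measureI)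
  qed
  also have "\<dots> = emeasure bernoulli_unif (G2 -` B)"
    using C B2 by (simp add: is_coupling_def)
  also have "\<dots> = emeasure (distr bernoulli_unif config_space G2) B"
    by (simp add: emeasure_distr[OF G2 B])
  finally show "emeasure (distr bernoulli_unif config_space G1) B = emeasure (distr bernoulli_unif config_space G2) B" .
qed simp

theorem theorem2:
  fixes V1 V1' V2 V2' :: "int list"
    and f1 :: "('q::finite) list \<Rightarrow> ('r1::finite) list \<Rightarrow> 'q"
    and f2 :: "'q list \<Rightarrow> ('r2::finite) list \<Rightarrow> 'q"
  assumes "distinct V1" "distinct V1'" "distinct V2" "distinct V2'"
  shows "stoch_global (explicit_global V1 V1' f1) = stoch_global (explicit_global V2 V2' f2)
     \<longleftrightarrow> (\<forall>c :: int \<Rightarrow> 'q. \<exists>\<gamma> :: ((int \<Rightarrow> 'r1) \<times> (int \<Rightarrow> 'r2)) measure.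
            is_coupling \<gamma> bernoulli_unif bernoulli_unif \<and>
            emeasure \<gamma> {(s1, s2). explicit_global V1 V1' f1 c s1 = explicit_global V2 V2' f2 c s2} = 1)"
proof
  assume eq: "stoch_global (explicit_global V1 V1' f1) = stoch_global (explicit_global V2 V2' f2)"
  show "\<forall>c :: int \<Rightarrow> 'q. \<exists>\<gamma> :: ((int \<Rightarrow> 'r1) \<times> (int \<Rightarrow> 'r2)) measure.
            is_coupling \<gamma> bernoulli_unif bernoulli_unif \<and>
            emeasure \<gamma> {(s1, s2). explicit_global V1 V1' f1 c s1 = explicit_global V2 V2' f2 c s2} = 1"
  proof
    fix c :: "int \<Rightarrow> 'q"
    let ?G1 = "explicit_global V1 V1' f1 c" and ?G2 = "explicit_global V2 V2' f2 c"
    have d: "distr bernoulli_unif config_space ?G1 = distr bernoulli_unif config_space ?G2"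
      using fun_cong[OF eq, of c] by (simp add: stoch_global_def)
    interpret cpl ?G1 ?G2
      by unfold_locales (simp_all add: eg_meas d)
    define W where "W z = (\<lambda>v. z + v) ` set V1' \<union> (\<lambda>v. z + v) ` set V2'" for z
    have "emeasure gam {(s1, s2). ?G1 s1 = ?G2 s2} = 1"
    proof (rule gam_conc[of W])
      show "finite (W z)" for z by (simp add: W_def)
      show "?G1 s z = ?G1 s' z" if "\<And>i. i \<in> W z \<Longrightarrow> s i = s' i" for z s s'
        using that unfolding explicit_global_def W_def
        by (intro arg_cong[where f="f1 _"] map_cong) auto
      show "?G2 s z = ?G2 s' z" if "\<And>i. i \<in> W z \<Longrightarrow> s i = s' i" for z s s'
        using that unfolding explicit_global_def W_def
        by (intro arg_cong[where f="f2 _"] map_cong) auto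
    qed
    then show "\<exists>\<gamma> :: ((int \<Rightarrow> 'r1) \<times> (int \<Rightarrow> 'r2)) measure.
            is_coupling \<gamma> bernoulli_unif bernoulli_unif \<and>
            emeasure \<gamma> {(s1, s2). ?G1 s1 = ?G2 s2} = 1"
      using gam_coupling by blast
  qed
next
  assume H: "\<forall>c :: int \<Rightarrow> 'q. \<exists>\<gamma> :: ((int \<Rightarrow> 'r1) \<times> (int \<Rightarrow> 'r2)) measure.
            is_coupling \<gamma> bernoulli_unif bernoulli_unif \<and>
            emeasure \<gamma> {(s1, s2). explicit_global V1 V1' f1 c s1 = explicit_global V2 V2' f2 c s2} = 1"
  show "stoch_global (explicit_global V1 V1' f1) = stoch_global (explicit_global V2 V2' f2)"
  proof
    fix c :: "int \<Rightarrow> 'q"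
    from H obtain \<gamma> :: "((int \<Rightarrow> 'r1) \<times> (int \<Rightarrow> 'r2)) measure" where
      g: "is_coupling \<gamma> bernoulli_unif bernoulli_unif"
         "emeasure \<gamma> {(s1, s2). explicit_global V1 V1' f1 c s1 = explicit_global V2 V2' f2 c s2} = 1"
      by blast
    show "stoch_global (explicit_global V1 V1' f1) c = stoch_global (explicit_global V2 V2' f2) c"
      unfolding stoch_global_def by (rule coupling_imp_eq[OF eg_meas eg_meas g])
  qed
qed


end
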